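(* Let $\mathcal{S}_2=\{\nu_{Q_AQ_B},\{\{P^x_a\}_a\}_x,\{\{Q^y_b\}_b\}_y\}$ be a quantum strategy for the two-player game $\mathcal{G}_2$ whose winning probability is at least $\omega_{\mathrm{exp}}$, and let $\mathcal{S}_3=\{\nu_{Q_AQ_BE},\{\{F^{xy}_c\}_{c\in\{0,1\}}\}_{x,y},\{\{P^x_a\}_a\}_x,\{\{Q^y_b\}_b\}_y\}$ be any extension of it (i.e. $\mathrm{Tr}_E\nu_{Q_AQ_BE}=\nu_{Q_AQ_B}$, Alice's and Bob's measurements unchanged, Eve measures POVM $\{F^{xy}_c\}_c$ on $E$ after learning $x,y$). Let $G_E$ be the event that Eve's output $c$ equals Alice's bit $S_A=SK_A(a,x,y)$. Then $$\Pr[G_E]_{\mathcal{S}_3}\le 1-\omega_{\mathrm{exp}}+\omega_3,$$ and consequently, for any $\beta\in[\omega_3,\omega_2]$ with $1-\beta+\omega_3>0$, $$-\log_2\Pr[G_E]_{\mathcal{S}_3}\ \ge\ \frac{\omega_{\mathrm{exp}}-\beta}{\ln 2\,(1-\beta+\omega_3)}-\log_2(1-\beta+\omega_3).$$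
   Context: A two-player non-local game $\mathcal{G}_2$ has finite question sets $\mathcal{X},\mathcal{Y}$, answer sets $\mathcal{A},\mathcal{B}$, a product question distribution $\pi$, and predicate $V(x,y,a,b)=[SK_A(a,x,y)=SK_B(b,x,y)]$ for deterministic bit-valued functions $SK_A,SK_B$. Its three-player extension $\mathcal{G}_3$: a third player receives both $(x,y)$ and outputs $c\in\{0,1\}$; the players win iff $SK_A(a,x,y)=SK_B(b,x,y)=c$. $\omega_2,\omega_3$ denote the quantum values of $\mathcal{G}_2,\mathcal{G}_3$ (supremum of winning probability over quantum strategies with arbitrary finite-dimensional shared states and local POVMs). $\omega_{\mathrm{exp}}\in[\omega_3,\omega_2]$. *)

theory Defs
  imports "HOL-Analysis.Analysis"
begin

text \<open>Finite-dimensional complex matrices are represented as entry functions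
  nat => nat => complex together with an explicit dimension d; only the entries
  with indices below d are meaningful.\<close>

type_synonym cmat = "nat \<Rightarrow> nat \<Rightarrow> complex"

definition mtrace :: "nat \<Rightarrow> cmat \<Rightarrow> complex" where
  "mtrace d M = (\<Sum>i<d. M i i)"

definition mmult :: "nat \<Rightarrow> cmat \<Rightarrow> cmat \<Rightarrow> cmat" where
  "mmult d M N = (\<lambda>i j. \<Sum>k<d. M i k * N k j)"

definition kron :: "nat \<Rightarrow> cmat \<Rightarrow> cmat \<Rightarrow> cmat" where
  "kron dB A B = (\<lambda>i j. A (i div dB) (j div dB) * B (i mod dB) (j mod dB))"

definition ptrace_last :: "nat \<Rightarrow> cmat \<Rightarrow> cmat" where
  "ptrace_last dE M = (\<lambda>i j. \<Sum>k<dE. M (i * dE + k) (j * dE + k))"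

definition psd :: "nat \<Rightarrow> cmat \<Rightarrow> bool" where
  "psd d M \<longleftrightarrow> (\<forall>v :: nat \<Rightarrow> complex.
      Im (\<Sum>i<d. \<Sum>j<d. cnj (v i) * M i j * v j) = 0 \<and>
      Re (\<Sum>i<d. \<Sum>j<d. cnj (v i) * M i j * v j) \<ge> 0)"

definition density :: "nat \<Rightarrow> cmat \<Rightarrow> bool" where
  "density d \<rho> \<longleftrightarrow> psd d \<rho> \<and> mtrace d \<rho> = 1"

definition povm :: "nat \<Rightarrow> ('o::finite \<Rightarrow> cmat) \<Rightarrow> bool" where
  "povm d M \<longleftrightarrow> (\<forall>r. psd d (M r)) \<and>
     (\<forall>i<d. \<forall>j<d. (\<Sum>r\<in>UNIV. M r i j) = (if i = j then 1 else 0))"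

definition prob_dist :: "('q::finite \<Rightarrow> real) \<Rightarrow> bool" where
  "prob_dist p \<longleftrightarrow> (\<forall>q. 0 \<le> p q) \<and> (\<Sum>q\<in>UNIV. p q) = 1"

definition strat2 :: "nat \<Rightarrow> nat \<Rightarrow> cmat \<Rightarrow> ('x \<Rightarrow> 'a::finite \<Rightarrow> cmat)
     \<Rightarrow> ('y \<Rightarrow> 'b::finite \<Rightarrow> cmat) \<Rightarrow> bool" where
  "strat2 dA dB \<rho> P Q \<longleftrightarrow> 0 < dA \<and> 0 < dB \<and> density (dA * dB) \<rho> \<and>
     (\<forall>x. povm dA (P x)) \<and> (\<forall>y. povm dB (Q y))"

definition strat3 :: "nat \<Rightarrow> nat \<Rightarrow> nat \<Rightarrow> cmat \<Rightarrow> ('x \<Rightarrow> 'a::finite \<Rightarrow> cmat)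
     \<Rightarrow> ('y \<Rightarrow> 'b::finite \<Rightarrow> cmat) \<Rightarrow> ('x \<Rightarrow> 'y \<Rightarrow> bool \<Rightarrow> cmat) \<Rightarrow> bool" where
  "strat3 dA dB dE \<rho> P Q F \<longleftrightarrow> 0 < dA \<and> 0 < dB \<and> 0 < dE \<and>
     density (dA * dB * dE) \<rho> \<and>
     (\<forall>x. povm dA (P x)) \<and> (\<forall>y. povm dB (Q y)) \<and> (\<forall>x y. povm dE (F x y))"

definition prob2 :: "nat \<Rightarrow> nat \<Rightarrow> cmat \<Rightarrow> ('x \<Rightarrow> 'a \<Rightarrow> cmat) \<Rightarrow> ('y \<Rightarrow> 'b \<Rightarrow> cmat)
     \<Rightarrow> 'x \<Rightarrow> 'y \<Rightarrow> 'a \<Rightarrow> 'b \<Rightarrow> real" where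
  "prob2 dA dB \<rho> P Q x y a b =
     Re (mtrace (dA * dB) (mmult (dA * dB) \<rho> (kron dB (P x a) (Q y b))))"

definition prob3 :: "nat \<Rightarrow> nat \<Rightarrow> nat \<Rightarrow> cmat \<Rightarrow> ('x \<Rightarrow> 'a \<Rightarrow> cmat) \<Rightarrow> ('y \<Rightarrow> 'b \<Rightarrow> cmat)
     \<Rightarrow> ('x \<Rightarrow> 'y \<Rightarrow> bool \<Rightarrow> cmat) \<Rightarrow> 'x \<Rightarrow> 'y \<Rightarrow> 'a \<Rightarrow> 'b \<Rightarrow> bool \<Rightarrow> real" where
  "prob3 dA dB dE \<rho> P Q F x y a b c =
     Re (mtrace (dA * dB * dE) (mmult (dA * dB * dE) \<rho>
           (kron dE (kron dB (P x a) (Q y b)) (F x y c))))"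

definition win2 :: "('x::finite \<Rightarrow> real) \<Rightarrow> ('y::finite \<Rightarrow> real)
     \<Rightarrow> ('a::finite \<Rightarrow> 'x \<Rightarrow> 'y \<Rightarrow> bool) \<Rightarrow> ('b::finite \<Rightarrow> 'x \<Rightarrow> 'y \<Rightarrow> bool)
     \<Rightarrow> nat \<Rightarrow> nat \<Rightarrow> cmat \<Rightarrow> ('x \<Rightarrow> 'a \<Rightarrow> cmat) \<Rightarrow> ('y \<Rightarrow> 'b \<Rightarrow> cmat) \<Rightarrow> real" where
  "win2 piA piB SKA SKB dA dB \<rho> P Q =
     (\<Sum>x\<in>UNIV. \<Sum>y\<in>UNIV. piA x * piB y *
        (\<Sum>a\<in>UNIV. \<Sum>b\<in>UNIV.
           (if SKA a x y = SKB b x y then prob2 dA dB \<rho> P Q x y a b else 0)))"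

definition win3 :: "('x::finite \<Rightarrow> real) \<Rightarrow> ('y::finite \<Rightarrow> real)
     \<Rightarrow> ('a::finite \<Rightarrow> 'x \<Rightarrow> 'y \<Rightarrow> bool) \<Rightarrow> ('b::finite \<Rightarrow> 'x \<Rightarrow> 'y \<Rightarrow> bool)
     \<Rightarrow> nat \<Rightarrow> nat \<Rightarrow> nat \<Rightarrow> cmat \<Rightarrow> ('x \<Rightarrow> 'a \<Rightarrow> cmat) \<Rightarrow> ('y \<Rightarrow> 'b \<Rightarrow> cmat)
     \<Rightarrow> ('x \<Rightarrow> 'y \<Rightarrow> bool \<Rightarrow> cmat) \<Rightarrow> real" where
  "win3 piA piB SKA SKB dA dB dE \<rho> P Q F =
     (\<Sum>x\<in>UNIV. \<Sum>y\<in>UNIV. piA x * piB y *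
        (\<Sum>a\<in>UNIV. \<Sum>b\<in>UNIV. \<Sum>c\<in>UNIV.
           (if SKA a x y = c \<and> SKB b x y = c
            then prob3 dA dB dE \<rho> P Q F x y a b c else 0)))"

definition prob_GE :: "('x::finite \<Rightarrow> real) \<Rightarrow> ('y::finite \<Rightarrow> real)
     \<Rightarrow> ('a::finite \<Rightarrow> 'x \<Rightarrow> 'y \<Rightarrow> bool) \<Rightarrow> ('b::finite)itself
     \<Rightarrow> nat \<Rightarrow> nat \<Rightarrow> nat \<Rightarrow> cmat \<Rightarrow> ('x \<Rightarrow> 'a \<Rightarrow> cmat) \<Rightarrow> ('y \<Rightarrow> 'b \<Rightarrow> cmat)
     \<Rightarrow> ('x \<Rightarrow> 'y \<Rightarrow> bool \<Rightarrow> cmat) \<Rightarrow> real" where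
  "prob_GE piA piB SKA _ dA dB dE \<rho> P Q F =
     (\<Sum>x\<in>UNIV. \<Sum>y\<in>UNIV. piA x * piB y *
        (\<Sum>a\<in>UNIV. \<Sum>b\<in>UNIV. \<Sum>c\<in>UNIV.
           (if c = SKA a x y then prob3 dA dB dE \<rho> P Q F x y a b c else 0)))"

definition omega2 :: "('x::finite \<Rightarrow> real) \<Rightarrow> ('y::finite \<Rightarrow> real)
     \<Rightarrow> ('a::finite \<Rightarrow> 'x \<Rightarrow> 'y \<Rightarrow> bool) \<Rightarrow> ('b::finite \<Rightarrow> 'x \<Rightarrow> 'y \<Rightarrow> bool) \<Rightarrow> real" where
  "omega2 piA piB SKA SKB =
     Sup {win2 piA piB SKA SKB dA dB \<rho> P Q | dA dB \<rho> P Q. strat2 dA dB \<rho> P Q}"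

definition omega3 :: "('x::finite \<Rightarrow> real) \<Rightarrow> ('y::finite \<Rightarrow> real)
     \<Rightarrow> ('a::finite \<Rightarrow> 'x \<Rightarrow> 'y \<Rightarrow> bool) \<Rightarrow> ('b::finite \<Rightarrow> 'x \<Rightarrow> 'y \<Rightarrow> bool) \<Rightarrow> real" where
  "omega3 piA piB SKA SKB =
     Sup {win3 piA piB SKA SKB dA dB dE \<rho> P Q F | dA dB dE \<rho> P Q F.
            strat3 dA dB dE \<rho> P Q F}"

end

theory Submission
  imports Defs
begin


definition qf :: "nat \<Rightarrow> cmat \<Rightarrow> (nat \<Rightarrow> complex) \<Rightarrow> complex" where
  "qf d M v = (\<Sum>i<d. \<Sum>j<d. cnj (v i) * M i j * v j)"

lemma psd_qf: "psd d M \<Longrightarrow> Im (qf d M v) = 0 \<and> Re (qf d M v) \<ge> 0"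
  unfolding psd_def qf_def by blast

lemma sum_if_const: "(\<Sum>j\<in>A. if P then f j else 0) = (if P then (\<Sum>j\<in>A. f j) else 0)"
  by simp

lemma sum_if_conj: "(\<Sum>j\<in>A. if P \<and> j = k then f j else 0) = (if P then (\<Sum>j\<in>A. if j = k then f j else 0) else 0)"
  by simp

lemma qf_add_point:
  assumes "k < d"
  shows "qf d M (\<lambda>i. v i + (if i = k then b else 0)) =
    qf d M v + cnj b * (\<Sum>j<d. M k j * v j) + (\<Sum>i<d. cnj (v i) * M i k) * b
     + cnj b * M k k * b"
proof -
  have e: "cnj (v i + (if i = k then b else 0)) * M i j * (v j + (if j = k then b else 0))
      = cnj (v i) * M i j * v j + (if i = k then cnj b * M k j * v j else 0)
        + (if j = k then cnj (v i) * M i k * b else 0)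
        + (if i = k \<and> j = k then cnj b * M k k * b else 0)" for i j
    by (auto simp: algebra_simps)
  have "qf d M (\<lambda>i. v i + (if i = k then b else 0)) =
     (\<Sum>i<d. \<Sum>j<d. cnj (v i) * M i j * v j) + (\<Sum>i<d. if i = k then (\<Sum>j<d. cnj b * M k j * v j) else 0)
     + (\<Sum>i<d. \<Sum>j<d. if j = k then cnj (v i) * M i k * b else 0)
     + (\<Sum>i<d. if i = k then (\<Sum>j<d. if j = k then cnj b * M k k * b else 0) else 0)"
    unfolding qf_def e by (simp only: sum.distrib sum_if_const sum_if_conj)
  also have "\<dots> = qf d M v + cnj b * (\<Sum>j<d. M k j * v j) + (\<Sum>i<d. cnj (v i) * M i k) * b
     + cnj b * M k k * b"
    using assms unfolding qf_def by (simp add: sum_distrib_left sum_distrib_right mult.assoc)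
  finally show ?thesis .
qed

lemma qf_zero: "qf d M (\<lambda>_. 0) = 0" unfolding qf_def by simp

lemma qf_unit: "i < d \<Longrightarrow> qf d M (\<lambda>l. if l = i then 1 else 0) = M i i"
  using qf_add_point[of i d M "\<lambda>_. 0" 1] by (simp add: qf_zero)

lemma qf_two: assumes "i < d" "j < d" "i \<noteq> j"
  shows "qf d M (\<lambda>l. (if l = i then 1 else 0) + (if l = j then b else 0)) =
     M i i + cnj b * M j i + M i j * b + cnj b * M j j * b"
proof -
  have a: "(\<Sum>l<d. M j l * (if l = i then 1 else 0)) = M j i" using assms(1) by (simp add: if_distrib[of "(*) _"] cong: if_cong)
  have b: "(\<Sum>l<d. cnj (if l = i then 1 else 0) * M l j) = M i j" using assms(1)
    by (simp add: if_distrib[of cnj] if_distrib[of "\<lambda>x. x * _"] cong: if_cong)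
  show ?thesis using qf_add_point[of j d M "\<lambda>l. if l = i then 1 else 0" b] assms a b
    by (simp only: qf_unit)
qed

lemma psd_diag: assumes "psd d M" "i < d" shows "Im (M i i) = 0" "Re (M i i) \<ge> 0"
  using psd_qf[OF assms(1), of "\<lambda>l. if l = i then 1 else 0"] qf_unit[OF assms(2), of M] by auto

lemma psd_herm: assumes "psd d M" "i < d" "j < d"
  shows "M j i = cnj (M i j)"
proof (cases "i = j")
  case True
  then show ?thesis using psd_diag[OF assms(1,2)] by (simp add: complex_eq_iff)
next
  case False
  have h1: "Im (M i i + M j i + M i j + M j j) = 0"
    using psd_qf[OF assms(1), of "\<lambda>l. (if l = i then 1 else 0) + (if l = j then 1 else 0)"]
      qf_two[OF assms(2,3) False, of M 1] by simp
  have h2: "Im (M i i - \<i> * M j i + M i j * \<i> + M j j) = 0"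
    using psd_qf[OF assms(1), of "\<lambda>l. (if l = i then 1 else 0) + (if l = j then \<i> else 0)"]
      qf_two[OF assms(2,3) False, of M \<i>] by simp
  show ?thesis using h1 h2 psd_diag[OF assms(1,2)] psd_diag[OF assms(1,3)]
    by (simp add: complex_eq_iff)
qed

lemma psd_zero: assumes "psd d M" "k < d" "M k k = 0" "j < d"
  shows "M k j = 0"
proof (rule ccontr)
  assume nz: "M k j \<noteq> 0"
  then have jk: "j \<noteq> k" using assms(3) by auto
  define z where "z = M k j"
  define n where "n = (cmod z)^2"
  have npos: "n > 0" using nz unfolding n_def z_def by simp
  define t where "t = (Re (M j j) + 1) / (2 * n)"
  define b where "b = - complex_of_real t * z"
  have hz: "M j k = cnj z" using psd_herm[OF assms(1) assms(4) assms(2)] z_def by simp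
  have zz: "cnj z * z = complex_of_real n" unfolding n_def using complex_norm_square[of z] by (simp add: mult.commute)
  have "qf d M (\<lambda>l. (if l = j then 1 else 0) + (if l = k then b else 0)) =
      M j j + cnj b * z + cnj z * b"
    using qf_two[OF assms(4) assms(2) jk, of M b] assms(3) hz z_def by simp
  also have "\<dots> = M j j - complex_of_real (2 * t * n)"
    unfolding b_def using zz by (simp add: algebra_simps)
  finally have "Re (M j j) - 2 * t * n \<ge> 0"
    using psd_qf[OF assms(1), of "\<lambda>l. (if l = j then 1 else 0) + (if l = k then b else 0)"] by simp
  moreover have "2 * t * n = Re (M j j) + 1" unfolding t_def using npos by simp
  ultimately show False by simp
qed

lemma psd_step: assumes "psd d M" "k < d" "M k k \<noteq> 0"
  shows "psd d (\<lambda>i j. M i j - M i k * M k j / M k k)"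
proof -
  define r where "r = Re (M k k)"
  have Mr: "M k k = complex_of_real r" using psd_diag[OF assms(1,2)] r_def by (simp add: complex_eq_iff)
  have rpos: "r \<noteq> 0" using Mr assms(3) by auto
  have "qf d (\<lambda>i j. M i j - M i k * M k j / M k k) v = qf d M (\<lambda>i. v i + (if i = k then - ((\<Sum>j<d. M k j * v j) / M k k) else 0))" for v
  proof -
    define s where "s = (\<Sum>j<d. M k j * v j)"
    have cs: "(\<Sum>i<d. cnj (v i) * M i k) = cnj s"
      unfolding s_def by (simp add: psd_herm[OF assms(1) _ assms(2)] mult.commute)
    have "qf d (\<lambda>i j. M i j - M i k * M k j / M k k) v =
        qf d M v - (\<Sum>i<d. cnj (v i) * M i k) * (\<Sum>j<d. M k j * v j) / M k k"
      unfolding qf_def by (simp add: algebra_simps sum_subtractf sum_distrib_left sum_distrib_right sum_divide_distrib)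
    also have "\<dots> = qf d M v - cnj s * s / complex_of_real r" using cs s_def Mr by simp
    also have "\<dots> = qf d M (\<lambda>i. v i + (if i = k then - (s / M k k) else 0))"
    proof -
      have e: "qf d M (\<lambda>i. v i + (if i = k then - (s / M k k) else 0)) = qf d M v + cnj (- (s / complex_of_real r)) * s + cnj s * (- (s / complex_of_real r))
         + cnj (- (s / complex_of_real r)) * complex_of_real r * (- (s / complex_of_real r))"
        using qf_add_point[OF assms(2), of M v "- (s / M k k)"] cs Mr unfolding s_def[symmetric] by simp
      have "cnj (- (s / complex_of_real r)) * s + cnj s * (- (s / complex_of_real r))
         + cnj (- (s / complex_of_real r)) * complex_of_real r * (- (s / complex_of_real r)) = - (cnj s * s / complex_of_real r)"
        using rpos by (simp add: field_simps)
      then show ?thesis using e by simp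
    qed
    finally show ?thesis unfolding s_def .
  qed
  then show ?thesis using assms(1) unfolding psd_def qf_def[symmetric] by metis
qed

lemma psd_decomp_aux:
  "n \<le> d \<Longrightarrow> psd d M \<Longrightarrow> (\<forall>i<d. \<forall>j<d. (i < d - n \<or> j < d - n) \<longrightarrow> M i j = 0) \<Longrightarrow>
   \<exists>u. \<forall>i<d. \<forall>j<d. M i j = (\<Sum>l<n. u l i * cnj (u l j))"
proof (induction n arbitrary: M)
  case 0
  then show ?case by auto
next
  case (Suc n)
  define k where "k = d - Suc n"
  have kd: "k < d" "d - n = Suc k" using Suc.prems(1) unfolding k_def by auto
  show ?case
  proof (cases "M k k = 0")
    case True
    have z1: "M k j = 0" if "j < d" for j using psd_zero[OF Suc.prems(2) kd(1) True that] .
    have z2: "M j k = 0" if "j < d" for j using psd_herm[OF Suc.prems(2) kd(1) that] z1[OF that] by simp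
    have "\<forall>i<d. \<forall>j<d. (i < d - n \<or> j < d - n) \<longrightarrow> M i j = 0"
    proof (intro allI impI)
      fix i j assume "i < d" "j < d" "i < d - n \<or> j < d - n"
      then show "M i j = 0" using Suc.prems(3) z1 z2 kd k_def by (metis less_Suc_eq)
    qed
    then obtain u where u: "\<forall>i<d. \<forall>j<d. M i j = (\<Sum>l<n. u l i * cnj (u l j))"
      using Suc.IH[OF _ Suc.prems(2)] Suc.prems(1) by auto
    show ?thesis
      by (rule exI[of _ "u(n := (\<lambda>_. 0))"]) (simp add: u)
  next
    case False
    define M' where "M' = (\<lambda>i j. M i j - M i k * M k j / M k k)"
    have p': "psd d M'" unfolding M'_def using psd_step[OF Suc.prems(2) kd(1) False] .
    have "\<forall>i<d. \<forall>j<d. (i < d - n \<or> j < d - n) \<longrightarrow> M' i j = 0"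
    proof (intro allI impI)
      fix i j assume ij: "i < d" "j < d" "i < d - n \<or> j < d - n"
      show "M' i j = 0"
      proof (cases "i < k \<or> j < k")
        case True
        then show ?thesis using Suc.prems(3) ij kd k_def unfolding M'_def by auto
      next
        case False
        then have "i = k \<or> j = k" using ij kd by auto
        then show ?thesis using \<open>M k k \<noteq> 0\<close> unfolding M'_def by auto
      qed
    qed
    then obtain u where u: "\<forall>i<d. \<forall>j<d. M' i j = (\<Sum>l<n. u l i * cnj (u l j))"
      using Suc.IH[OF _ p'] Suc.prems(1) by auto
    define r where "r = Re (M k k)"
    have Mr: "M k k = complex_of_real r" using psd_diag[OF Suc.prems(2) kd(1)] r_def by (simp add: complex_eq_iff)
    have rpos: "r > 0" using Mr False psd_diag[OF Suc.prems(2) kd(1)] r_def by (metis less_eq_real_def of_real_0)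
    define w where "w = (\<lambda>i. M i k / complex_of_real (sqrt r))"
    show ?thesis
    proof (rule exI[of _ "u(n := w)"], intro allI impI)
      fix i j assume ij: "i < d" "j < d"
      have "w i * cnj (w j) = M i k * M k j / M k k"
        unfolding w_def using psd_herm[OF Suc.prems(2) kd(1) ij(2)] Mr rpos
        by (simp add: field_simps power2_eq_square[symmetric] flip: of_real_mult of_real_power)
      then show "M i j = (\<Sum>l<Suc n. (u(n := w)) l i * cnj ((u(n := w)) l j))"
        using u ij unfolding M'_def by (simp add: algebra_simps)
    qed
  qed
qed

lemma psd_decomp: "psd d M \<Longrightarrow> \<exists>u. \<forall>i<d. \<forall>j<d. M i j = (\<Sum>l<d. u l i * cnj (u l j))"
  using psd_decomp_aux[of d d M] by simp




lemma sum_reindex_mult: fixes f :: "nat \<Rightarrow> 'a::comm_monoid_add" shows "(\<Sum>i<m*n. f i) = (\<Sum>I<m. \<Sum>e<n. f (I*n+e))"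
proof -
  have "(\<Sum>e<n. f (I*n+e)) = (\<Sum>i\<in>{I*n..<I*n+n}. f i)" for I
    using sum.shift_bounds_nat_ivl[of f 0 "I*n" n] by (simp add: atLeast0LessThan add.commute)
  then show ?thesis using sum.nat_group[of f n m] by simp
qed

lemma mtrace_mmult: "mtrace D (mmult D \<rho> K) = (\<Sum>i<D. \<Sum>k<D. \<rho> i k * K k i)"
  unfolding mtrace_def mmult_def by simp

lemma trace_nonneg:
  assumes "psd D \<rho>" "finite T" "\<forall>i<D. \<forall>j<D. K j i = (\<Sum>t\<in>T. w t j * cnj (w t i))"
  shows "Re (mtrace D (mmult D \<rho> K)) \<ge> 0"
proof -
  have "mtrace D (mmult D \<rho> K) = (\<Sum>i<D. \<Sum>k<D. \<Sum>t\<in>T. \<rho> i k * (w t k * cnj (w t i)))"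
    unfolding mtrace_mmult using assms(3) by (simp add: sum_distrib_left)
  also have "\<dots> = (\<Sum>t\<in>T. qf D \<rho> (w t))"
    unfolding qf_def
    by (subst sum.swap, rule sum.cong, simp, subst sum.swap, (rule sum.cong, simp)+, simp add: mult_ac)
  finally have "Re (mtrace D (mmult D \<rho> K)) = (\<Sum>t\<in>T. Re (qf D \<rho> (w t)))" by simp
  also have "\<dots> \<ge> 0" using psd_qf[OF assms(1)] by (simp add: sum_nonneg)
  finally show ?thesis .
qed

lemma idx_bounds:
  fixes i dA dB dE :: nat
  assumes "i < dA * dB * dE" "0 < dB" "0 < dE"
  shows "i div dE div dB < dA" "i div dE mod dB < dB" "i mod dE < dE" "i div dE < dA * dB"
proof -
  show d: "i div dE < dA * dB" using assms(1,3) by (simp add: div_less_iff_less_mult)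
  show "i div dE div dB < dA" using d assms(2) by (simp add: div_less_iff_less_mult)
  show "i div dE mod dB < dB" using assms(2) by simp
  show "i mod dE < dE" using assms(3) by simp
qed

lemma prob3_nonneg:
  assumes "strat3 dA dB dE \<rho> P Q F"
  shows "prob3 dA dB dE \<rho> P Q F x y a b c \<ge> 0"
proof -
  have ps: "psd (dA*dB*dE) \<rho>" "psd dA (P x a)" "psd dB (Q y b)" "psd dE (F x y c)"
    "0 < dB" "0 < dE"
    using assms unfolding strat3_def density_def povm_def by auto
  obtain u1 where u1: "\<forall>i<dA. \<forall>j<dA. P x a i j = (\<Sum>l<dA. u1 l i * cnj (u1 l j))" using psd_decomp[OF ps(2)] by blast
  obtain u2 where u2: "\<forall>i<dB. \<forall>j<dB. Q y b i j = (\<Sum>l<dB. u2 l i * cnj (u2 l j))" using psd_decomp[OF ps(3)] by blast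
  obtain u3 where u3: "\<forall>i<dE. \<forall>j<dE. F x y c i j = (\<Sum>l<dE. u3 l i * cnj (u3 l j))" using psd_decomp[OF ps(4)] by blast
  define w where "w = (\<lambda>(k::nat,l::nat,m::nat) i. u1 k (i div dE div dB) * u2 l (i div dE mod dB) * u3 m (i mod dE))"
  have "\<forall>i<dA*dB*dE. \<forall>j<dA*dB*dE. kron dE (kron dB (P x a) (Q y b)) (F x y c) j i
      = (\<Sum>t\<in>{..<dA} \<times> {..<dB} \<times> {..<dE}. w t j * cnj (w t i))"
  proof (intro allI impI)
    fix i j assume ij: "i < dA*dB*dE" "j < dA*dB*dE"
    note bi = idx_bounds[OF ij(1) ps(5,6)] and bj = idx_bounds[OF ij(2) ps(5,6)]
    have "kron dE (kron dB (P x a) (Q y b)) (F x y c) j i =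
       (\<Sum>k<dA. u1 k (j div dE div dB) * cnj (u1 k (i div dE div dB))) *
       (\<Sum>l<dB. u2 l (j div dE mod dB) * cnj (u2 l (i div dE mod dB))) *
       (\<Sum>m<dE. u3 m (j mod dE) * cnj (u3 m (i mod dE)))"
      unfolding kron_def using u1 u2 u3 bi bj by simp
    also have "\<dots> = (\<Sum>k<dA. \<Sum>l<dB. \<Sum>m<dE. w (k,l,m) j * cnj (w (k,l,m) i))"
      unfolding w_def by (simp add: sum_distrib_left sum_distrib_right mult_ac) (rule sum.swap)
    also have "\<dots> = (\<Sum>t\<in>{..<dA} \<times> {..<dB} \<times> {..<dE}. w t j * cnj (w t i))"
      by (simp add: sum.cartesian_product)
    finally show "kron dE (kron dB (P x a) (Q y b)) (F x y c) j i = (\<Sum>t\<in>{..<dA} \<times> {..<dB} \<times> {..<dE}. w t j * cnj (w t i))" .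
  qed
  then show ?thesis unfolding prob3_def
    by (intro trace_nonneg[OF ps(1), where T="{..<dA} \<times> {..<dB} \<times> {..<dE}" and w=w]) auto
qed

lemma idx_eq:
  fixes i k dB dE :: nat
  assumes "k div dE div dB = i div dE div dB" "k div dE mod dB = i div dE mod dB" "k mod dE = i mod dE"
  shows "k = i"
proof -
  have "k div dE = i div dE" using assms(1,2) by (metis div_mult_mod_eq)
  then show ?thesis using assms(3) by (metis div_mult_mod_eq)
qed

lemma sum_swap_out: "(\<Sum>a\<in>UNIV. \<Sum>i<D. \<Sum>k<D. f a i k) = (\<Sum>i<D. \<Sum>k<D. \<Sum>a\<in>UNIV. f a i k)"
  by (subst sum.swap, rule sum.cong, simp, rule sum.swap)

lemma prob3_sum:
  assumes "strat3 dA dB dE \<rho> P Q F"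
  shows "(\<Sum>a\<in>UNIV. \<Sum>b\<in>UNIV. \<Sum>c\<in>UNIV. prob3 dA dB dE \<rho> P Q F x y a b c) = 1"
proof -
  let ?D = "dA*dB*dE"
  have ps: "mtrace ?D \<rho> = 1" "povm dA (P x)" "povm dB (Q y)" "povm dE (F x y)" "0 < dB" "0 < dE"
    using assms unfolding strat3_def density_def by auto
  have K: "(\<Sum>a\<in>UNIV. \<Sum>b\<in>UNIV. \<Sum>c\<in>UNIV. kron dE (kron dB (P x a) (Q y b)) (F x y c) k i) = (if k = i then 1 else 0)"
    if "i < ?D" "k < ?D" for i k
  proof -
    note bi = idx_bounds[OF that(1) ps(5,6)] and bk = idx_bounds[OF that(2) ps(5,6)]
    have "(\<Sum>a\<in>UNIV. \<Sum>b\<in>UNIV. \<Sum>c\<in>UNIV. kron dE (kron dB (P x a) (Q y b)) (F x y c) k i) =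
      (\<Sum>a\<in>UNIV. P x a (k div dE div dB) (i div dE div dB)) * ((\<Sum>b\<in>UNIV. Q y b (k div dE mod dB) (i div dE mod dB))
       * (\<Sum>c\<in>UNIV. F x y c (k mod dE) (i mod dE)))"
      unfolding kron_def mult.assoc by (simp only: sum_product, simp only: sum_distrib_left)
    also have "\<dots> = (if k div dE div dB = i div dE div dB then 1 else 0) * (if k div dE mod dB = i div dE mod dB then 1 else 0)
       * (if k mod dE = i mod dE then 1 else 0)"
      using ps(2,3,4) bi bk unfolding povm_def by simp
    also have "\<dots> = (if k = i then 1 else 0)" using idx_eq[of k dE dB i] by auto
    finally show ?thesis .
  qed
  have "(\<Sum>a\<in>UNIV. \<Sum>b\<in>UNIV. \<Sum>c\<in>UNIV. mtrace ?D (mmult ?D \<rho> (kron dE (kron dB (P x a) (Q y b)) (F x y c))))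
     = (\<Sum>i<?D. \<Sum>k<?D. \<rho> i k * (\<Sum>a\<in>UNIV. \<Sum>b\<in>UNIV. \<Sum>c\<in>UNIV. kron dE (kron dB (P x a) (Q y b)) (F x y c) k i))"
    unfolding mtrace_mmult sum_distrib_left
    by (simp only: sum_swap_out)
  also have "\<dots> = (\<Sum>i<?D. \<Sum>k<?D. \<rho> i k * (if k = i then 1 else 0))"
    by (intro sum.cong refl) (simp add: K)
  also have "\<dots> = mtrace ?D \<rho>" unfolding mtrace_def by (simp add: if_distrib[of "(*) _"] cong: if_cong)
  finally show ?thesis unfolding prob3_def using ps(1) by (simp flip: Re_sum)
qed

lemma prob3_marg:
  assumes "strat3 dA dB dE \<rho>3 P Q F"
    and "\<forall>i < dA * dB. \<forall>j < dA * dB. ptrace_last dE \<rho>3 i j = \<rho>2 i j"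
  shows "(\<Sum>c\<in>UNIV. prob3 dA dB dE \<rho>3 P Q F x y a b c) = prob2 dA dB \<rho>2 P Q x y a b"
proof -
  let ?N = "dA*dB"
  let ?K = "kron dB (P x a) (Q y b)"
  have ps: "povm dE (F x y)" "0 < dE" using assms(1) unfolding strat3_def by auto
  have Fs: "(\<Sum>c\<in>UNIV. F x y c e' e) = (if e' = e then 1 else 0)" if "e < dE" "e' < dE" for e e'
    using ps(1) that unfolding povm_def by auto
  have "(\<Sum>c\<in>UNIV. mtrace (?N*dE) (mmult (?N*dE) \<rho>3 (kron dE ?K (F x y c))))
     = (\<Sum>i<?N*dE. \<Sum>k<?N*dE. \<rho>3 i k * (?K (k div dE) (i div dE) * (\<Sum>c\<in>UNIV. F x y c (k mod dE) (i mod dE))))"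
    unfolding mtrace_mmult kron_def sum_distrib_left by (simp only: sum_swap_out)
  also have "\<dots> = (\<Sum>I<?N. \<Sum>e<dE. \<Sum>K<?N. \<Sum>e'<dE. \<rho>3 (I*dE+e) (K*dE+e') * (?K K I * (if e' = e then 1 else 0)))"
    unfolding sum_reindex_mult using ps(2) by (intro sum.cong refl) (simp add: Fs)
  also have "\<dots> = (\<Sum>I<?N. \<Sum>e<dE. \<Sum>K<?N. \<rho>3 (I*dE+e) (K*dE+e) * ?K K I)"
    by (simp add: if_distrib[of "(*) _"] cong: if_cong)
  also have "\<dots> = (\<Sum>I<?N. \<Sum>K<?N. ptrace_last dE \<rho>3 I K * ?K K I)"
    unfolding ptrace_last_def sum_distrib_right by (rule sum.cong[OF refl], rule sum.swap)
  also have "\<dots> = (\<Sum>I<?N. \<Sum>K<?N. \<rho>2 I K * ?K K I)"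
    using assms(2) by (intro sum.cong refl) simp
  finally show ?thesis unfolding prob3_def prob2_def mtrace_mmult[symmetric]
    by (simp flip: Re_sum)
qed




lemma prob_dist_prod: "prob_dist piA \<Longrightarrow> prob_dist piB \<Longrightarrow> (\<Sum>x\<in>UNIV. \<Sum>y\<in>UNIV. piA x * piB y) = 1"
  unfolding prob_dist_def by (simp add: sum_product[symmetric])

lemma win3_le1:
  assumes "prob_dist piA" "prob_dist piB" "strat3 dA dB dE \<rho> P Q F"
  shows "win3 piA piB SKA SKB dA dB dE \<rho> P Q F \<le> 1"
proof -
  have "win3 piA piB SKA SKB dA dB dE \<rho> P Q F \<le> (\<Sum>x\<in>UNIV. \<Sum>y\<in>UNIV. piA x * piB y *
        (\<Sum>a\<in>UNIV. \<Sum>b\<in>UNIV. \<Sum>c\<in>UNIV. prob3 dA dB dE \<rho> P Q F x y a b c))"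
    unfolding win3_def using assms(1,2) prob3_nonneg[OF assms(3)] unfolding prob_dist_def
    by (intro sum_mono mult_left_mono) auto
  also have "\<dots> = 1" using prob3_sum[OF assms(3)] prob_dist_prod[OF assms(1,2)] by simp
  finally show ?thesis .
qed

lemma win3_le_omega3:
  assumes "prob_dist piA" "prob_dist piB" "strat3 dA dB dE \<rho> P Q F"
  shows "win3 piA piB SKA SKB dA dB dE \<rho> P Q F \<le> omega3 piA piB SKA SKB"
  unfolding omega3_def
proof (rule cSup_upper)
  show "win3 piA piB SKA SKB dA dB dE \<rho> P Q F \<in> {win3 piA piB SKA SKB dA dB dE \<rho> P Q F | dA dB dE \<rho> P Q F. strat3 dA dB dE \<rho> P Q F}"
    using assms(3) by blast
  show "bdd_above {win3 piA piB SKA SKB dA dB dE \<rho> P Q F | dA dB dE \<rho> P Q F. strat3 dA dB dE \<rho> P Q F}"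
    using win3_le1[OF assms(1,2)] by (intro bdd_aboveI[of _ 1]) blast
qed

lemma log_part:
  fixes p q d :: real
  assumes "0 < p" "p \<le> q + d" "0 < q"
  shows "- log 2 p \<ge> (- d) / (ln 2 * q) - log 2 q"
proof -
  have qd: "0 < q + d" using assms by linarith
  have "ln (q + d) - ln q = ln ((q + d) / q)" using qd assms(3) by (simp add: ln_div)
  also have "\<dots> \<le> (q + d) / q - 1" using qd assms(3) by (intro ln_le_minus_one) simp
  also have "\<dots> = d / q" using assms(3) by (simp add: field_simps)
  finally have l: "ln (q + d) \<le> ln q + d / q" by simp
  have "ln p \<le> ln (q + d)" using assms(1,2) by simp
  with l have "ln p \<le> ln q + d / q" by simp
  then have "ln p / ln 2 \<le> (ln q + d / q) / ln 2"
    by (rule divide_right_mono) simp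
  also have "\<dots> = ln q / ln 2 + d / (ln 2 * q)" by (simp add: field_simps)
  finally have "ln p / ln 2 \<le> ln q / ln 2 + d / (ln 2 * q)" .
  moreover have "(- d) / (ln 2 * q) = - (d / (ln 2 * q))" by simp
  ultimately show ?thesis unfolding log_def by linarith
qed




theorem mainTheorem6:
  fixes piA :: "'x::finite \<Rightarrow> real" and piB :: "'y::finite \<Rightarrow> real"
    and SKA :: "'a::finite \<Rightarrow> 'x \<Rightarrow> 'y \<Rightarrow> bool"
    and SKB :: "'b::finite \<Rightarrow> 'x \<Rightarrow> 'y \<Rightarrow> bool"
    and dA dB dE :: nat and \<rho>2 \<rho>3 :: cmat
    and P :: "'x \<Rightarrow> 'a \<Rightarrow> cmat" and Q :: "'y \<Rightarrow> 'b \<Rightarrow> cmat"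
    and F :: "'x \<Rightarrow> 'y \<Rightarrow> bool \<Rightarrow> cmat"
    and \<omega>exp :: real
  assumes "prob_dist piA" and "prob_dist piB"
    and "omega3 piA piB SKA SKB \<le> \<omega>exp" and "\<omega>exp \<le> omega2 piA piB SKA SKB"
    and "strat2 dA dB \<rho>2 P Q"
    and "win2 piA piB SKA SKB dA dB \<rho>2 P Q \<ge> \<omega>exp"
    and "strat3 dA dB dE \<rho>3 P Q F"
    and "\<forall>i < dA * dB. \<forall>j < dA * dB. ptrace_last dE \<rho>3 i j = \<rho>2 i j"
  shows "(prob_GE piA piB SKA TYPE('b) dA dB dE \<rho>3 P Q F
           \<le> 1 - \<omega>exp + omega3 piA piB SKA SKB)
    \<and> (\<forall>\<beta>. omega3 piA piB SKA SKB \<le> \<beta> \<and> \<beta> \<le> omega2 piA piB SKA SKB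
           \<and> 1 - \<beta> + omega3 piA piB SKA SKB > 0
           \<and> prob_GE piA piB SKA TYPE('b) dA dB dE \<rho>3 P Q F > 0 \<longrightarrow>
           - log 2 (prob_GE piA piB SKA TYPE('b) dA dB dE \<rho>3 P Q F)
             \<ge> (\<omega>exp - \<beta>) / (ln 2 * (1 - \<beta> + omega3 piA piB SKA SKB))
               - log 2 (1 - \<beta> + omega3 piA piB SKA SKB))"
proof -
  note S3 = assms(7)
  define w where "w = (\<lambda>x y. piA x * piB y)"
  have wnn: "0 \<le> w x y" for x y using assms(1,2) unfolding prob_dist_def w_def by simp
  define p3 where "p3 = prob3 dA dB dE \<rho>3 P Q F"
  define GE where "GE = (\<lambda>x y. \<Sum>a\<in>UNIV. \<Sum>b\<in>UNIV. \<Sum>c\<in>UNIV. (if c = SKA a x y then p3 x y a b c else 0))"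
  define W2 where "W2 = (\<lambda>x y. \<Sum>a\<in>UNIV. \<Sum>b\<in>UNIV. (if SKA a x y = SKB b x y then prob2 dA dB \<rho>2 P Q x y a b else 0))"
  define W3 where "W3 = (\<lambda>x y. \<Sum>a\<in>UNIV. \<Sum>b\<in>UNIV. \<Sum>c\<in>UNIV. (if SKA a x y = c \<and> SKB b x y = c then p3 x y a b c else 0))"
  have key: "GE x y \<le> 1 - W2 x y + W3 x y" for x y
  proof -
    have W2': "W2 x y = (\<Sum>a\<in>UNIV. \<Sum>b\<in>UNIV. \<Sum>c\<in>UNIV. (if SKA a x y = SKB b x y then p3 x y a b c else 0))"
      unfolding W2_def p3_def sum_if_const using prob3_marg[OF S3 assms(8), of x y] by (intro sum.cong refl) simp
    have "GE x y + W2 x y - W3 x y = (\<Sum>a\<in>UNIV. \<Sum>b\<in>UNIV. \<Sum>c\<in>UNIV.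
       (if c = SKA a x y then p3 x y a b c else 0) + (if SKA a x y = SKB b x y then p3 x y a b c else 0)
       - (if SKA a x y = c \<and> SKB b x y = c then p3 x y a b c else 0))"
      unfolding GE_def W2' W3_def by (simp add: sum.distrib sum_subtractf)
    also have "\<dots> \<le> (\<Sum>a\<in>UNIV. \<Sum>b\<in>UNIV. \<Sum>c\<in>UNIV. p3 x y a b c)"
      using prob3_nonneg[OF S3] unfolding p3_def by (intro sum_mono) auto
    also have "\<dots> = 1" unfolding p3_def using prob3_sum[OF S3] .
    finally show ?thesis by simp
  qed
  have "prob_GE piA piB SKA TYPE('b) dA dB dE \<rho>3 P Q F = (\<Sum>x\<in>UNIV. \<Sum>y\<in>UNIV. w x y * GE x y)"
    unfolding prob_GE_def w_def GE_def p3_def ..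
  also have "\<dots> \<le> (\<Sum>x\<in>UNIV. \<Sum>y\<in>UNIV. w x y * (1 - W2 x y + W3 x y))"
    using key wnn by (intro sum_mono mult_left_mono) auto
  also have "\<dots> = (\<Sum>x\<in>UNIV. \<Sum>y\<in>UNIV. w x y) - (\<Sum>x\<in>UNIV. \<Sum>y\<in>UNIV. w x y * W2 x y) + (\<Sum>x\<in>UNIV. \<Sum>y\<in>UNIV. w x y * W3 x y)"
    by (simp add: algebra_simps sum.distrib sum_subtractf)
  also have "\<dots> = 1 - win2 piA piB SKA SKB dA dB \<rho>2 P Q + win3 piA piB SKA SKB dA dB dE \<rho>3 P Q F"
    unfolding w_def W2_def W3_def p3_def win2_def win3_def using prob_dist_prod[OF assms(1,2)] by simp
  also have "\<dots> \<le> 1 - \<omega>exp + omega3 piA piB SKA SKB"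
    using assms(6) win3_le_omega3[OF assms(1,2) S3, of SKA SKB] by linarith
  finally have part1: "prob_GE piA piB SKA TYPE('b) dA dB dE \<rho>3 P Q F \<le> 1 - \<omega>exp + omega3 piA piB SKA SKB" .
  show ?thesis
  proof (intro conjI allI impI)
    show "prob_GE piA piB SKA TYPE('b) dA dB dE \<rho>3 P Q F \<le> 1 - \<omega>exp + omega3 piA piB SKA SKB" by (fact part1)
  next
    fix \<beta> assume h: "omega3 piA piB SKA SKB \<le> \<beta> \<and> \<beta> \<le> omega2 piA piB SKA SKB
           \<and> 1 - \<beta> + omega3 piA piB SKA SKB > 0
           \<and> prob_GE piA piB SKA TYPE('b) dA dB dE \<rho>3 P Q F > 0"
    have "- log 2 (prob_GE piA piB SKA TYPE('b) dA dB dE \<rho>3 P Q F)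
       \<ge> (- (\<beta> - \<omega>exp)) / (ln 2 * (1 - \<beta> + omega3 piA piB SKA SKB)) - log 2 (1 - \<beta> + omega3 piA piB SKA SKB)"
      using h part1 by (intro log_part) auto
    then show "- log 2 (prob_GE piA piB SKA TYPE('b) dA dB dE \<rho>3 P Q F)
             \<ge> (\<omega>exp - \<beta>) / (ln 2 * (1 - \<beta> + omega3 piA piB SKA SKB))
               - log 2 (1 - \<beta> + omega3 piA piB SKA SKB)" by simp
  qed
qed


end
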